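(* (i) Any one-vertex ribbon graph with cyclic word $(A\,t\,B\,\bar t\,C)$ is connected, in the category $\mathrm{RI}_S$, to the one with cyclic word $(A\,C\,t\,B\,\bar t)$. (ii) Every connected one-vertex ribbon graph with outer flag set $S$ lies in the same connected component of $\mathrm{RI}_S$ as a one-vertex ribbon graph whose cyclic word is in normal form $$(S_1\,l_1\,S_2\,\bar l_1\,l_2\,S_3\,\bar l_2\cdots l_{b-1}\,S_b\,\bar l_{b-1}\;e_1\bar e_1\cdots e_p\bar e_p\;a_1b_1\bar a_1\bar b_1\cdots a_gb_g\bar a_g\bar b_g),$$ where $S_1,\dots,S_b$ are nonempty words in the outer flags with $S=S_1\sqcup\dots\sqcup S_b$ and $0<|S_1|\le\dots\le|S_b|$, and $l_i,e_j,a_k,b_k$ (with their barred partners) are the loops.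
   Context: A graph $(F,V,\partial,\imath)$ has finite flag set $F$, vertex set $V$, incidence $\partial:F\to V$ and involution $\imath$ whose 2-element orbits are edges and whose fixed points are outer flags. A ribbon graph is a graph with a cyclic order (single-orbit permutation) on each $F_v=\partial^{-1}(v)$. A one-vertex ribbon graph is represented by a cyclic word listing all flags in cyclic order; the two flags of a loop are written $t,\bar t$ (or $l_i,\bar l_i$ etc.), outer flags by other letters; $A,B,C$ denote (possibly empty) words. Contracting a non-loop edge $\{s,t\}$ merges its vertices and deletes $s,t$, the merged vertex receiving the cyclic order $x\mapsto(\rho\tau_{st})^m(x)$, $\rho=\sigma_{\partial s}\sqcup\sigma_{\partial t}$, $m\ge1$ minimal with result not in $\{s,t\}$. $\mathrm{RI}_S$ is the category whose objects are connected ribbon graphs with outer flag set $S$ and whose morphisms are composites of isomorphisms of ribbon graphs (graph isomorphisms transporting the cyclic orders) and contractions of non-loop edges, restricting to the identity on $S$. *)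

theory Defs
  imports Main
begin

text \<open>Ribbon graphs: flag set F, vertex set V, incidence bd, involution inv,
  and a permutation cyc of F whose restriction to each fibre F_v is a cyclic order.
  Values of the functions outside the carriers are irrelevant (all notions below
  only look at the carriers).\<close>

record ('f, 'v) rgraph =
  flags :: "'f set"
  verts :: "'v set"
  bd    :: "'f \<Rightarrow> 'v"
  inv   :: "'f \<Rightarrow> 'f"
  cyc   :: "'f \<Rightarrow> 'f"

definition ribbon_graph :: "('f, 'v) rgraph \<Rightarrow> bool" where
  "ribbon_graph G \<longleftrightarrow>
     finite (flags G) \<and> finite (verts G) \<and>
     (\<forall>f\<in>flags G. bd G f \<in> verts G) \<and>
     (\<forall>f\<in>flags G. inv G f \<in> flags G \<and> inv G (inv G f) = f) \<and>
     bij_betw (cyc G) (flags G) (flags G) \<and>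
     (\<forall>f\<in>flags G. bd G (cyc G f) = bd G f) \<and>
     (\<forall>f\<in>flags G. \<forall>g\<in>flags G. bd G f = bd G g \<longrightarrow> (\<exists>n. (cyc G ^^ n) f = g))"

definition outer_flags :: "('f, 'v) rgraph \<Rightarrow> 'f set" where
  "outer_flags G = {f \<in> flags G. inv G f = f}"

definition is_edge :: "('f, 'v) rgraph \<Rightarrow> 'f \<Rightarrow> 'f \<Rightarrow> bool" where
  "is_edge G s t \<longleftrightarrow> s \<in> flags G \<and> t \<in> flags G \<and> s \<noteq> t \<and> inv G s = t"

definition non_loop_edge :: "('f, 'v) rgraph \<Rightarrow> 'f \<Rightarrow> 'f \<Rightarrow> bool" where
  "non_loop_edge G s t \<longleftrightarrow> is_edge G s t \<and> bd G s \<noteq> bd G t"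

definition adj_rel :: "('f, 'v) rgraph \<Rightarrow> ('v \<times> 'v) set" where
  "adj_rel G = {(bd G s, bd G (inv G s)) | s. s \<in> flags G}"

definition graph_connected :: "('f, 'v) rgraph \<Rightarrow> bool" where
  "graph_connected G \<longleftrightarrow> verts G \<noteq> {} \<and>
     (\<forall>u\<in>verts G. \<forall>w\<in>verts G. (u, w) \<in> (adj_rel G)\<^sup>*)"

definition RI_obj :: "'f set \<Rightarrow> ('f, 'v) rgraph \<Rightarrow> bool" where
  "RI_obj S G \<longleftrightarrow> ribbon_graph G \<and> graph_connected G \<and> outer_flags G = S"

definition rg_iso :: "'f set \<Rightarrow> ('f, 'v) rgraph \<Rightarrow> ('f, 'v) rgraph
                       \<Rightarrow> ('f \<Rightarrow> 'f) \<Rightarrow> ('v \<Rightarrow> 'v) \<Rightarrow> bool" where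
  "rg_iso S G H \<phi> \<psi> \<longleftrightarrow>
     bij_betw \<phi> (flags G) (flags H) \<and> bij_betw \<psi> (verts G) (verts H) \<and>
     (\<forall>f\<in>flags G. bd H (\<phi> f) = \<psi> (bd G f) \<and> inv H (\<phi> f) = \<phi> (inv G f)
                  \<and> cyc H (\<phi> f) = \<phi> (cyc G f)) \<and>
     (\<forall>s\<in>S. \<phi> s = s)"

definition contr_step :: "('f, 'v) rgraph \<Rightarrow> 'f \<Rightarrow> 'f \<Rightarrow> 'f \<Rightarrow> 'f" where
  "contr_step G s t y = cyc G (if y = s then t else if y = t then s else y)"

definition contr_cyc :: "('f, 'v) rgraph \<Rightarrow> 'f \<Rightarrow> 'f \<Rightarrow> 'f \<Rightarrow> 'f" where
  "contr_cyc G s t x =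
     (contr_step G s t ^^ (LEAST m. 1 \<le> m \<and> (contr_step G s t ^^ m) x \<notin> {s, t})) x"

definition is_contraction :: "('f, 'v) rgraph \<Rightarrow> 'f \<Rightarrow> 'f \<Rightarrow> ('f, 'v) rgraph \<Rightarrow> bool" where
  "is_contraction G s t H \<longleftrightarrow> non_loop_edge G s t \<and>
     (\<exists>w. w \<notin> verts G - {bd G s, bd G t} \<and>
        flags H = flags G - {s, t} \<and>
        verts H = (verts G - {bd G s, bd G t}) \<union> {w} \<and>
        (\<forall>f\<in>flags H.
           bd H f = (if bd G f \<in> {bd G s, bd G t} then w else bd G f) \<and>
           inv H f = inv G f \<and>
           cyc H f = (if bd G f \<in> {bd G s, bd G t} then contr_cyc G s t f else cyc G f)))"

text \<open>Generating morphisms of RI_S (composites of these are the morphisms).\<close>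
definition RI_gen :: "'f set \<Rightarrow> ('f, 'v) rgraph \<Rightarrow> ('f, 'v) rgraph \<Rightarrow> bool" where
  "RI_gen S G H \<longleftrightarrow> RI_obj S G \<and> RI_obj S H \<and>
     ((\<exists>\<phi> \<psi>. rg_iso S G H \<phi> \<psi>) \<or> (\<exists>s t. is_contraction G s t H))"

definition RI_connected :: "'f set \<Rightarrow> ('f, 'v) rgraph \<Rightarrow> ('f, 'v) rgraph \<Rightarrow> bool" where
  "RI_connected S G H \<longleftrightarrow> (G, H) \<in> ({(X, Y). RI_gen S X Y} \<union> {(X, Y). RI_gen S Y X})\<^sup>*"

text \<open>One-vertex ribbon graph given by a cyclic word w (a list of distinct flags)
  and the involution iota pairing the two flags of each loop.\<close>
definition cyc_of_word :: "'f list \<Rightarrow> 'f \<Rightarrow> 'f" where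
  "cyc_of_word w x =
     (if x \<in> set w then w ! (Suc (THE i. i < length w \<and> w ! i = x) mod length w) else x)"

definition word_graph :: "'v \<Rightarrow> 'f list \<Rightarrow> ('f \<Rightarrow> 'f) \<Rightarrow> ('f, 'v) rgraph" where
  "word_graph v w \<iota> = \<lparr> flags = set w, verts = {v}, bd = (\<lambda>_. v), inv = \<iota>,
                          cyc = cyc_of_word w \<rparr>"

definition nf_word :: "'f list list \<Rightarrow> ('f \<times> 'f) list \<Rightarrow> ('f \<times> 'f) list
                        \<Rightarrow> ('f \<times> 'f \<times> 'f \<times> 'f) list \<Rightarrow> 'f list" where
  "nf_word Ss ls es gs =
     (case Ss of [] \<Rightarrow> []
        | S1 # rest \<Rightarrow> S1 @ concat (map (\<lambda>((l, lb), Si). l # Si @ [lb]) (zip ls rest)))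
     @ concat (map (\<lambda>(e, eb). [e, eb]) es)
     @ concat (map (\<lambda>(a, b, ab, bb). [a, b, ab, bb]) gs)"

definition is_normal_form :: "'f set \<Rightarrow> 'v \<Rightarrow> ('f, 'v) rgraph \<Rightarrow> bool" where
  "is_normal_form S v H \<longleftrightarrow>
     (\<exists>Ss ls es gs \<iota>.
        length ls = length Ss - 1 \<and>
        (\<forall>Si\<in>set Ss. Si \<noteq> []) \<and>
        sorted (map length Ss) \<and>
        set (concat Ss) = S \<and>
        distinct (nf_word Ss ls es gs) \<and>
        (\<forall>x\<in>set (concat Ss). \<iota> x = x) \<and>
        (\<forall>(l, lb)\<in>set ls. \<iota> l = lb \<and> \<iota> lb = l) \<and>
        (\<forall>(e, eb)\<in>set es. \<iota> e = eb \<and> \<iota> eb = e) \<and>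
        (\<forall>(a, b, ab, bb)\<in>set gs. \<iota> a = ab \<and> \<iota> ab = a \<and> \<iota> b = bb \<and> \<iota> bb = b) \<and>
        H = word_graph v (nf_word Ss ls es gs) \<iota>)"

end

theory Submission
  imports Defs
begin


lemma set_idx: "x \<in> set w \<Longrightarrow> \<exists>i. i < length w \<and> x = w!i"
  by (metis in_set_conv_nth)

lemma cyc_nth:
  assumes "distinct w" "i < length w"
  shows "cyc_of_word w (w!i) = w ! (Suc i mod length w)"
proof -
  have "(THE k. k < length w \<and> w!k = w!i) = i"
    using assms by (auto intro!: the_equality simp: nth_eq_iff_index_eq)
  thus ?thesis using assms by (simp add: cyc_of_word_def)
qed

lemma cyc_out: "x \<notin> set w \<Longrightarrow> cyc_of_word w x = x"
  by (simp add: cyc_of_word_def)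

lemma cyc_in:
  assumes "distinct w" "x \<in> set w" shows "cyc_of_word w x \<in> set w"
proof -
  obtain i where "i < length w" "x = w!i" using set_idx[OF assms(2)] by blast
  have "length w > 0" using assms by auto
  then have "Suc i mod length w < length w" by simp
  thus ?thesis using assms cyc_nth[of w i] \<open>i < length w\<close> \<open>x = w!i\<close> by (metis nth_mem)
qed

lemma cyc_adj:
  assumes "distinct (p @ x # y # q)" shows "cyc_of_word (p @ x # y # q) x = y"
proof -
  have "x = (p @ x # y # q) ! length p" by simp
  then show ?thesis using cyc_nth[OF assms, of "length p"] by (simp add: nth_append)
qed

lemma cyc_wrap:
  assumes "distinct (y # p @ [x])" shows "cyc_of_word (y # p @ [x]) x = y"
proof -
  have "x = (y # p @ [x]) ! Suc (length p)" by (simp add: nth_append)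
  then show ?thesis using cyc_nth[OF assms, of "Suc (length p)"] by simp
qed

lemma cyc_rotate1:
  assumes "distinct w" shows "cyc_of_word (rotate1 w) = cyc_of_word w"
proof
  fix x
  show "cyc_of_word (rotate1 w) x = cyc_of_word w x"
  proof (cases "x \<in> set w")
    case False thus ?thesis by (simp add: cyc_out)
  next
    case True
    then obtain i where i: "i < length (rotate1 w)" "x = rotate1 w ! i"
      by (metis in_set_conv_nth set_rotate1)
    have n: "length w > 0" using True by auto
    have x: "x = w ! (Suc i mod length w)" using i by (simp add: nth_rotate1)
    have "cyc_of_word (rotate1 w) x = rotate1 w ! (Suc i mod length w)"
      using cyc_nth[of "rotate1 w" i] i assms by simp
    also have "\<dots> = w ! (Suc (Suc i mod length w) mod length w)"
      using n by (simp add: nth_rotate1)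
    also have "\<dots> = cyc_of_word w x" using x cyc_nth[of w "Suc i mod length w"] assms n by simp
    finally show ?thesis .
  qed
qed

lemma cyc_rotate: "distinct w \<Longrightarrow> cyc_of_word (rotate k w) = cyc_of_word w"
  by (induction k) (simp_all add: cyc_rotate1)

lemma cyc_swap: "distinct (X @ Y) \<Longrightarrow> cyc_of_word (Y @ X) = cyc_of_word (X @ Y)"
  using cyc_rotate[of "X@Y" "length X"] by (simp add: rotate_append)

lemma cyc_map:
  assumes "distinct w" "inj_on \<phi> (set w)" "x \<in> set w"
  shows "cyc_of_word (map \<phi> w) (\<phi> x) = \<phi> (cyc_of_word w x)"
proof -
  obtain i where i: "i < length w" "x = w!i" using set_idx[OF assms(3)] by blast
  have d: "distinct (map \<phi> w)" using assms by (simp add: distinct_map)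
  have "\<phi> x = map \<phi> w ! i" using i by simp
  have "length w > 0" using i by auto
  then have "Suc i mod length w < length w" by simp
  then show ?thesis using cyc_nth[OF d, of i] cyc_nth[OF assms(1) i(1)] i
    by simp
qed

lemma cyc_orbit:
  assumes "distinct w" "i < length w"
  shows "(cyc_of_word w ^^ k) (w!i) = w ! ((i + k) mod length w)"
proof (induction k)
  case 0 thus ?case using assms by simp
next
  case (Suc k)
  have "length w > 0" using assms by auto
  then show ?case using Suc cyc_nth[OF assms(1), of "(i + k) mod length w"]
    by (simp add: mod_Suc_eq)
qed

lemma cyc_image: assumes "distinct w" shows "cyc_of_word w ` set w = set w"
proof
  show "cyc_of_word w ` set w \<subseteq> set w" using cyc_in assms by auto
  show "set w \<subseteq> cyc_of_word w ` set w"
  proof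
    fix y assume "y \<in> set w"
    then obtain j where j: "j < length w" "y = w!j" by (auto simp: in_set_conv_nth)
    define i where "i = (j + length w - 1) mod length w"
    have il: "i < length w" using j unfolding i_def by (cases "length w") auto
    have n: "length w > 0" using j by auto
    have "Suc i mod length w = Suc (j + length w - 1) mod length w" unfolding i_def by (simp add: mod_Suc_eq)
    also have "Suc (j + length w - 1) = j + length w" using n by simp
    also have "(j + length w) mod length w = j" using j by simp
    finally have "Suc i mod length w = j" .
    then have "cyc_of_word w (w!i) = y" using cyc_nth[OF assms il] j by simp
    then show "y \<in> cyc_of_word w ` set w" using il by (metis image_eqI nth_mem)
  qed
qed

lemma cyc_bij: "distinct w \<Longrightarrow> bij_betw (cyc_of_word w) (set w) (set w)"
  by (simp add: bij_betw_def cyc_image eq_card_imp_inj_on)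


definition wfw :: "('f \<Rightarrow> 'f) \<Rightarrow> 'f list \<Rightarrow> bool" where
  "wfw \<iota> w \<longleftrightarrow> distinct w \<and> (\<forall>x\<in>set w. \<iota> x \<in> set w \<and> \<iota> (\<iota> x) = x)"

definition outer :: "('f \<Rightarrow> 'f) \<Rightarrow> 'f list \<Rightarrow> 'f set" where
  "outer \<iota> w = {x \<in> set w. \<iota> x = x}"

lemma wg_RI_obj:
  assumes "wfw \<iota> w"
  shows "RI_obj (outer \<iota> w) (word_graph v w \<iota>)"
proof -
  have d: "distinct w" using assms by (simp add: wfw_def)
  have tr: "\<exists>n. (cyc_of_word w ^^ n) f = g" if fg: "f \<in> set w" "g \<in> set w" for f g
  proof -
    obtain i where i: "i < length w" "f = w!i" using set_idx[OF fg(1)] by blast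
    obtain j where j: "j < length w" "g = w!j" using set_idx[OF fg(2)] by blast
    have "(i + (j + length w - i)) mod length w = j" using i j by simp
    then show ?thesis using cyc_orbit[OF d i(1), of "j + length w - i"] i j by metis
  qed
  have "ribbon_graph (word_graph v w \<iota>)"
    unfolding ribbon_graph_def word_graph_def using assms tr cyc_bij[OF d]
    by (auto simp: wfw_def)
  moreover have "graph_connected (word_graph v w \<iota>)"
    by (simp add: graph_connected_def word_graph_def)
  moreover have "outer_flags (word_graph v w \<iota>) = outer \<iota> w"
    by (simp add: outer_flags_def word_graph_def outer_def)
  ultimately show ?thesis by (simp add: RI_obj_def)
qed

lemma wg_iso:
  assumes "wfw \<iota> w" "inj_on \<phi> (set w)" "\<forall>x\<in>set w. \<iota>' (\<phi> x) = \<phi> (\<iota> x)"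
    "\<forall>x\<in>S. \<phi> x = x"
  shows "rg_iso S (word_graph v w \<iota>) (word_graph v' (map \<phi> w) \<iota>') \<phi> (\<lambda>_. v')"
  using assms cyc_map[of w \<phi>] unfolding rg_iso_def word_graph_def
  by (auto simp: wfw_def inj_on_imp_bij_betw bij_betw_def)

lemma RI_conn_refl: "RI_connected S G G"
  by (simp add: RI_connected_def)

lemma RI_conn_trans: "RI_connected S G H \<Longrightarrow> RI_connected S H K \<Longrightarrow> RI_connected S G K"
  unfolding RI_connected_def by (rule rtrancl_trans)

lemma RI_conn_sym: assumes "RI_connected S G H" shows "RI_connected S H G"
proof -
  let ?R = "{(X, Y). RI_gen S X Y} \<union> {(X, Y). RI_gen S Y X}"
  have "(G, H) \<in> ?R\<^sup>*" using assms by (simp add: RI_connected_def)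
  then have "(H, G) \<in> ?R\<^sup>*"
  proof (induction rule: rtrancl_induct)
    case base thus ?case by simp
  next
    case (step y z)
    then have "(z, y) \<in> ?R" by auto
    then show ?case using step by (meson converse_rtrancl_into_rtrancl)
  qed
  then show ?thesis by (simp add: RI_connected_def)
qed

lemma RI_conn_gen: "RI_gen S G H \<Longrightarrow> RI_connected S G H"
  by (auto simp: RI_connected_def)

lemma RI_conn_iso: "RI_obj S G \<Longrightarrow> RI_obj S H \<Longrightarrow> rg_iso S G H \<phi> \<psi> \<Longrightarrow> RI_connected S G H"
  by (rule RI_conn_gen) (auto simp: RI_gen_def)

lemma RI_conn_contr: "RI_obj S G \<Longrightarrow> RI_obj S H \<Longrightarrow> is_contraction G s t H \<Longrightarrow> RI_connected S G H"
  by (rule RI_conn_gen) (auto simp: RI_gen_def)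

lemma wg_rotate: "distinct (X @ Y) \<Longrightarrow> word_graph v (Y @ X) \<iota> = word_graph v (X @ Y) \<iota>"
  by (simp add: word_graph_def cyc_swap Un_commute)

lemma contr_step_pow1: "(contr_step G s t ^^ 1) f = contr_step G s t f" by simp

lemma contr_cyc_simple:
  assumes "f \<noteq> s" "f \<noteq> t" "cyc G f \<notin> {s, t}"
  shows "contr_cyc G s t f = cyc G f"
proof -
  have st: "contr_step G s t f = cyc G f" using assms by (simp add: contr_step_def)
  have "(LEAST m. 1 \<le> m \<and> (contr_step G s t ^^ m) f \<notin> {s, t}) = 1"
    by (rule Least_equality) (use assms st in auto)
  then show ?thesis using st by (simp add: contr_cyc_def)
qed

lemma contr_cyc_s:
  assumes "f \<noteq> s" "f \<noteq> t" "cyc G f = s" "cyc G t \<notin> {s, t}"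
  shows "contr_cyc G s t f = cyc G t"
proof -
  have st: "contr_step G s t f = s" using assms by (simp add: contr_step_def)
  have st2: "contr_step G s t s = cyc G t" by (simp add: contr_step_def)
  have p2: "(contr_step G s t ^^ 2) f = cyc G t" using st st2 by (simp add: numeral_2_eq_2)
  have "(LEAST m. 1 \<le> m \<and> (contr_step G s t ^^ m) f \<notin> {s, t}) = 2"
  proof (rule Least_equality)
    show "1 \<le> (2::nat) \<and> (contr_step G s t ^^ 2) f \<notin> {s, t}" using p2 assms by simp
    fix m assume "1 \<le> m \<and> (contr_step G s t ^^ m) f \<notin> {s, t}"
    then show "2 \<le> m" using st by (cases m; cases "m - 1") auto
  qed
  then show ?thesis using p2 by (simp add: contr_cyc_def)
qed

lemma contr_cyc_t:
  assumes "f \<noteq> s" "f \<noteq> t" "s \<noteq> t" "cyc G f = t" "cyc G s \<notin> {s, t}"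
  shows "contr_cyc G s t f = cyc G s"
proof -
  have st: "contr_step G s t f = t" using assms by (simp add: contr_step_def)
  have st2: "contr_step G s t t = cyc G s" using assms by (simp add: contr_step_def)
  have p2: "(contr_step G s t ^^ 2) f = cyc G s" using st st2 by (simp add: numeral_2_eq_2)
  have "(LEAST m. 1 \<le> m \<and> (contr_step G s t ^^ m) f \<notin> {s, t}) = 2"
  proof (rule Least_equality)
    show "1 \<le> (2::nat) \<and> (contr_step G s t ^^ 2) f \<notin> {s, t}" using p2 assms by simp
    fix m assume "1 \<le> m \<and> (contr_step G s t ^^ m) f \<notin> {s, t}"
    then show "2 \<le> m" using st by (cases m; cases "m - 1") auto
  qed
  then show ?thesis using p2 by (simp add: contr_cyc_def)
qed


lemma contr_merge:
  assumes d: "distinct (s # P @ s' # Q)" and nP: "P \<noteq> []" and nQ: "Q \<noteq> []"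
    and c1: "\<forall>x\<in>set (s#P). cyc K x = cyc_of_word (s#P) x"
    and c2: "\<forall>x\<in>set (s'#Q). cyc K x = cyc_of_word (s'#Q) x"
    and f: "f \<in> set (P@Q)"
  shows "contr_cyc K s s' f = cyc_of_word (P@Q) f"
proof -
  obtain p0 ps where P: "P = p0 # ps" using nP by (cases P) auto
  obtain q0 qs where Q: "Q = q0 # qs" using nQ by (cases Q) auto
  have fs: "f \<noteq> s" "f \<noteq> s'" using d f by auto
  have ss: "s \<noteq> s'" using d by auto
  have cs': "cyc K s' = q0"
    using c2 cyc_adj[of "[]" s' q0 qs] d Q by auto
  have cs: "cyc K s = p0"
    using c1 cyc_adj[of "[]" s p0 ps] d P by auto
  have q0n: "q0 \<notin> {s, s'}" "p0 \<notin> {s, s'}" using d P Q by auto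
  show ?thesis
  proof (cases "f \<in> set P")
    case True
    then obtain p r where Pe: "P = p @ f # r" by (meson split_list)
    show ?thesis
    proof (cases r)
      case Nil
      have "cyc K f = s" using c1 cyc_wrap[of s p f] d Pe Nil by auto
      then have "contr_cyc K s s' f = q0" using contr_cyc_s[of f s s' K] fs cs' q0n by auto
      moreover have "cyc_of_word (P@Q) f = q0"
        using cyc_adj[of p f q0 qs] d Pe Nil Q by auto
      ultimately show ?thesis by simp
    next
      case (Cons y r')
      have "cyc K f = y" using c1 cyc_adj[of "s#p" f y r'] d Pe Cons by auto
      moreover have "y \<notin> {s, s'}" using d Pe Cons by auto
      ultimately have "contr_cyc K s s' f = y" using contr_cyc_simple[of f s s' K] fs by auto
      moreover have "cyc_of_word (P@Q) f = y"
        using cyc_adj[of p f y "r' @ Q"] d Pe Cons by auto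
      ultimately show ?thesis by simp
    qed
  next
    case False
    then have "f \<in> set Q" using f by auto
    then obtain q r where Qe: "Q = q @ f # r" by (meson split_list)
    show ?thesis
    proof (cases r)
      case Nil
      have "cyc K f = s'" using c2 cyc_wrap[of s' q f] d Qe Nil by auto
      then have "contr_cyc K s s' f = p0" using contr_cyc_t[of f s s' K] fs cs q0n ss by auto
      moreover have "cyc_of_word (P@Q) f = p0"
        using cyc_wrap[of p0 "ps @ q" f] d P Qe Nil by auto
      ultimately show ?thesis by simp
    next
      case (Cons y r')
      have "cyc K f = y" using c2 cyc_adj[of "s'#q" f y r'] d Qe Cons by auto
      moreover have "y \<notin> {s, s'}" using d Qe Cons by auto
      ultimately have "contr_cyc K s s' f = y" using contr_cyc_simple[of f s s' K] fs by auto
      moreover have "cyc_of_word (P@Q) f = y"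
        using cyc_adj[of "P @ q" f y r'] d Qe Cons by auto
      ultimately show ?thesis by simp
    qed
  qed
qed


lemma word_orbit:
  assumes d: "distinct w" and "f \<in> set w" "g \<in> set w"
  shows "\<exists>n. (cyc_of_word w ^^ n) f = g"
proof -
  obtain i where i: "i < length w" "f = w!i" using set_idx[OF assms(2)] by blast
  obtain j where j: "j < length w" "g = w!j" using set_idx[OF assms(3)] by blast
  have "(i + (j + length w - i)) mod length w = j" using i j by simp
  then show ?thesis using cyc_orbit[OF d i(1), of "j + length w - i"] i j by metis
qed

lemma funpow_agree:
  assumes "\<forall>x\<in>X. f x = g x" "\<forall>x\<in>X. g x \<in> X" "x \<in> X"
  shows "(f^^n) x = (g^^n) x \<and> (g^^n) x \<in> X"
  by (induction n) (use assms in auto)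

lemma move_i:
  fixes v :: 'v and \<iota> :: "'f \<Rightarrow> 'f"
  assumes infv: "\<exists>v2::'v. v2 \<noteq> v" and inff: "infinite (UNIV::'f set)"
    and wf: "wfw \<iota> (A@[t]@B@[tb]@C)" and it: "\<iota> t = tb"
  shows "RI_connected (outer \<iota> (A@[t]@B@[tb]@C)) (word_graph v (A@[t]@B@[tb]@C) \<iota>)
           (word_graph v (A@C@[t]@B@[tb]) \<iota>)"
proof -
  define W where "W = A@[t]@B@[tb]@C"
  define S where "S = outer \<iota> W"
  have dW: "distinct W" and clW: "\<forall>x\<in>set W. \<iota> x \<in> set W \<and> \<iota> (\<iota> x) = x"
    using wf by (auto simp: wfw_def W_def)
  have itb: "\<iota> tb = t" using clW it by (auto simp: W_def)
  obtain s where s: "s \<notin> set W" using ex_new_if_finite[OF inff] by blast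
  obtain s' where s': "s' \<notin> insert s (set W)"
    using ex_new_if_finite[OF inff, of "insert s (set W)"] by blast
  obtain v2 where v2: "v2 \<noteq> v" using infv by blast
  define wu where "wu = s # A @ [t]"
  define ww where "ww = s' # B @ tb # C"
  have dall: "distinct (wu @ ww)" using dW s s' by (auto simp: wu_def ww_def W_def)
  have du: "distinct wu" and dw: "distinct ww" and disj: "set wu \<inter> set ww = {}"
    using dall by auto
  define \<iota>' where "\<iota>' = (\<lambda>x. if x = s then s' else if x = s' then s else \<iota> x)"
  define K :: "('f,'v) rgraph" where "K = \<lparr> flags = set wu \<union> set ww, verts = {v, v2},
     bd = (\<lambda>x. if x \<in> set wu then v else v2), inv = \<iota>',
     cyc = (\<lambda>x. if x \<in> set wu then cyc_of_word wu x else cyc_of_word ww x) \<rparr>"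
  have fK: "flags K = set wu \<union> set ww" by (simp add: K_def)
  have setK: "set wu \<union> set ww = set W \<union> {s, s'}" by (auto simp: wu_def ww_def W_def)
  have cu: "\<forall>x\<in>set wu. cyc K x = cyc_of_word wu x" by (simp add: K_def)
  have cw: "\<forall>x\<in>set ww. cyc K x = cyc_of_word ww x" using disj by (auto simp: K_def)
  have iK: "inv K = \<iota>'" by (simp add: K_def)
  have bK: "bd K = (\<lambda>x. if x \<in> set wu then v else v2)" by (simp add: K_def)
  have vK: "verts K = {v, v2}" by (simp add: K_def)
  have ss: "s \<noteq> s'" using s' by auto
  have bij: "bij_betw (cyc K) (flags K) (flags K)"
  proof -
    have "bij_betw (cyc K) (set wu) (set wu)"
      using cyc_bij[OF du] cu bij_betw_cong by metis
    moreover have "bij_betw (cyc K) (set ww) (set ww)"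
      using cyc_bij[OF dw] cw bij_betw_cong by metis
    ultimately show ?thesis using disj fK by (simp add: bij_betw_combine)
  qed
  have invol: "\<forall>f\<in>flags K. inv K f \<in> flags K \<and> inv K (inv K f) = f"
    using clW s s' ss unfolding fK setK iK \<iota>'_def by auto
  have bdcyc: "\<forall>f\<in>flags K. bd K (cyc K f) = bd K f"
  proof
    fix f assume "f \<in> flags K"
    then consider "f \<in> set wu" | "f \<in> set ww" "f \<notin> set wu" using fK by auto
    then show "bd K (cyc K f) = bd K f"
    proof cases
      case 1 then show ?thesis using cu cyc_in[OF du] bK by auto
    next
      case 2 then have "cyc K f \<in> set ww" using cw cyc_in[OF dw] by auto
      then show ?thesis using 2 disj bK by auto
    qed
  qed
  have trans: "\<forall>f\<in>flags K. \<forall>g\<in>flags K. bd K f = bd K g \<longrightarrow> (\<exists>n. (cyc K ^^ n) f = g)"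
  proof (intro ballI impI)
    fix f g assume f: "f \<in> flags K" and g: "g \<in> flags K" and b: "bd K f = bd K g"
    have "(f \<in> set wu \<and> g \<in> set wu) \<or> (f \<in> set ww \<and> g \<in> set ww)"
      using f g b disj fK bK v2 by (auto split: if_splits)
    then show "\<exists>n. (cyc K ^^ n) f = g"
    proof
      assume a: "f \<in> set wu \<and> g \<in> set wu"
      then obtain n where "(cyc_of_word wu ^^ n) f = g" using word_orbit[OF du] by blast
      moreover have "(cyc K ^^ n) f = (cyc_of_word wu ^^ n) f"
        using funpow_agree[of "set wu" "cyc K" "cyc_of_word wu" f n] cu cyc_in[OF du] a by auto
      ultimately show ?thesis by auto
    next
      assume a: "f \<in> set ww \<and> g \<in> set ww"
      then obtain n where "(cyc_of_word ww ^^ n) f = g" using word_orbit[OF dw] by blast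
      moreover have "(cyc K ^^ n) f = (cyc_of_word ww ^^ n) f"
        using funpow_agree[of "set ww" "cyc K" "cyc_of_word ww" f n] cw cyc_in[OF dw] a by auto
      ultimately show ?thesis by auto
    qed
  qed
  have bu: "\<And>x. x \<in> set wu \<Longrightarrow> bd K x = v" using bK by simp
  have bw: "\<And>x. x \<notin> set wu \<Longrightarrow> bd K x = v2" using bK by simp
  have sin: "s \<in> set wu" "s' \<in> set ww" "s' \<notin> set wu" "s \<in> flags K" "s' \<in> flags K"
    using dall fK by (auto simp: wu_def ww_def)
  have bdv: "\<forall>f\<in>flags K. bd K f \<in> verts K" using bK vK by simp
  have rgK: "ribbon_graph K"
    unfolding ribbon_graph_def
    apply (intro conjI)
    using bij invol bdcyc trans bdv by (simp_all add: fK vK)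
  have iKs: "inv K s = s'" "inv K s' = s" using ss by (simp_all add: iK \<iota>'_def)
  have adj1: "(v, v2) \<in> adj_rel K"
  proof -
    have "(bd K s, bd K (inv K s)) \<in> adj_rel K" unfolding adj_rel_def using sin by blast
    then show ?thesis using iKs bu bw sin by simp
  qed
  have adj2: "(v2, v) \<in> adj_rel K"
  proof -
    have "(bd K s', bd K (inv K s')) \<in> adj_rel K" unfolding adj_rel_def using sin by blast
    then show ?thesis using iKs bu bw sin by simp
  qed
  have conK: "graph_connected K"
    unfolding graph_connected_def vK using adj1 adj2 by auto
  have outK: "outer_flags K = S"
    unfolding outer_flags_def S_def outer_def fK setK iK \<iota>'_def using ss s s' by auto
  have objK: "RI_obj S K" using rgK conK outK by (simp add: RI_obj_def)
  have objH1: "RI_obj S (word_graph v W \<iota>)"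
    using wg_RI_obj[of \<iota> W v] wf by (simp add: S_def W_def)
  have c1: "is_contraction K s s' (word_graph v W \<iota>)"
  proof -
    have nl: "non_loop_edge K s s'"
      unfolding non_loop_edge_def is_edge_def using ss sin iKs bu bw v2 by auto
    have m: "\<forall>f\<in>set W. contr_cyc K s s' f = cyc_of_word W f"
    proof
      fix f assume "f \<in> set W"
      moreover have "W = (A@[t]) @ (B @ tb # C)" by (simp add: W_def)
      ultimately show "contr_cyc K s s' f = cyc_of_word W f"
        using contr_merge[of s "A@[t]" s' "B @ tb # C" K f] dall cu cw
        by (simp add: wu_def ww_def)
    qed
    have bs: "bd K s = v" "bd K s' = v2" using bu bw sin by auto
    have e1: "v \<notin> verts K - {bd K s, bd K s'}" using bs vK by auto
    have e2: "flags (word_graph v W \<iota>) = flags K - {s, s'}"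
      using s s' ss by (auto simp: word_graph_def fK setK)
    have e3: "verts (word_graph v W \<iota>) = (verts K - {bd K s, bd K s'}) \<union> {v}"
      using bs vK by (auto simp: word_graph_def)
    have e4: "\<forall>f\<in>flags (word_graph v W \<iota>).
           bd (word_graph v W \<iota>) f = (if bd K f \<in> {bd K s, bd K s'} then v else bd K f) \<and>
           inv (word_graph v W \<iota>) f = inv K f \<and>
           cyc (word_graph v W \<iota>) f = (if bd K f \<in> {bd K s, bd K s'} then contr_cyc K s s' f else cyc K f)"
    proof
      fix f assume f: "f \<in> flags (word_graph v W \<iota>)"
      then have fW: "f \<in> set W" by (simp add: word_graph_def)
      have "bd K f \<in> {bd K s, bd K s'}" using bs bK by simp
      moreover have "inv K f = \<iota> f" using fW s s' by (auto simp: iK \<iota>'_def)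
      ultimately show "bd (word_graph v W \<iota>) f = (if bd K f \<in> {bd K s, bd K s'} then v else bd K f) \<and>
           inv (word_graph v W \<iota>) f = inv K f \<and>
           cyc (word_graph v W \<iota>) f = (if bd K f \<in> {bd K s, bd K s'} then contr_cyc K s s' f else cyc K f)"
        using m fW by (simp add: word_graph_def)
    qed
    show ?thesis unfolding is_contraction_def using nl e1 e2 e3 e4 by blast
  qed
  define w2 where "w2 = s # A @ C @ s' # B"
  have setw2: "set w2 = set W \<union> {s, s'} - {t, tb}"
    using dW s s' by (auto simp: w2_def W_def)
  have dw2: "distinct w2" using dall by (auto simp: w2_def wu_def ww_def)
  have wf2: "wfw \<iota>' w2"
  proof -
    have "\<forall>x\<in>set w2. \<iota>' x \<in> set w2 \<and> \<iota>' (\<iota>' x) = x"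
    proof
      fix x assume x: "x \<in> set w2"
      show "\<iota>' x \<in> set w2 \<and> \<iota>' (\<iota>' x) = x"
      proof (cases "x = s \<or> x = s'")
        case True then show ?thesis using ss by (auto simp: \<iota>'_def w2_def)
      next
        case False
        then have xW: "x \<in> set W" "x \<noteq> t" "x \<noteq> tb" using x setw2 by auto
        have "\<iota> x \<in> set W" "\<iota> (\<iota> x) = x" using clW xW by auto
        moreover have "\<iota> x \<noteq> t" "\<iota> x \<noteq> tb" using xW clW it itb by metis+
        moreover have "\<iota> x \<noteq> s" "\<iota> x \<noteq> s'" using \<open>\<iota> x \<in> set W\<close> s s' by auto
        ultimately show ?thesis using False setw2 by (auto simp: \<iota>'_def)
      qed
    qed
    then show ?thesis using dw2 by (simp add: wfw_def)
  qed
  have outw2: "outer \<iota>' w2 = S"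
    unfolding outer_def S_def setw2 using it itb ss dW s s'
    by (auto simp: \<iota>'_def W_def)
  have objH2: "RI_obj S (word_graph v w2 \<iota>')" using wg_RI_obj[OF wf2, of v] outw2 by simp
  have c2: "is_contraction K t tb (word_graph v w2 \<iota>')"
  proof -
    have tu: "t \<in> set wu" and tbu: "tb \<notin> set wu" "tb \<in> set ww"
      using dall by (auto simp: wu_def ww_def)
    have ttb: "t \<noteq> tb" using dW by (auto simp: W_def)
    have nl: "non_loop_edge K t tb"
    proof -
      have "t \<noteq> s" "t \<noteq> s'" using s s' by (auto simp: W_def)
      then have "inv K t = tb" using it by (simp add: iK \<iota>'_def)
      then show ?thesis unfolding non_loop_edge_def is_edge_def
        using tu tbu ttb bu bw v2 fK by auto
    qed
    have r1: "cyc_of_word (t # s # A) = cyc_of_word wu"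
      using cyc_swap[of "s#A" "[t]"] du by (simp add: wu_def)
    have r2: "cyc_of_word (tb # C @ s' # B) = cyc_of_word ww"
      using cyc_swap[of "s'#B" "tb # C"] dw by (simp add: ww_def)
    have m: "\<forall>f\<in>set w2. contr_cyc K t tb f = cyc_of_word w2 f"
    proof
      fix f assume f: "f \<in> set w2"
      have d3: "distinct (t # (s # A) @ tb # (C @ s' # B))" using dall by (auto simp: wu_def ww_def)
      have e1: "\<forall>x\<in>set (t # s # A). cyc K x = cyc_of_word (t # s # A) x"
        using cu r1 by (auto simp: wu_def)
      have e2: "\<forall>x\<in>set (tb # C @ s' # B). cyc K x = cyc_of_word (tb # C @ s' # B) x"
        using cw r2 by (auto simp: ww_def)
      show "contr_cyc K t tb f = cyc_of_word w2 f"
        using contr_merge[OF d3 _ _ e1 e2, of f] f by (simp add: w2_def)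
    qed
    have bs: "bd K t = v" "bd K tb = v2" using bu bw tu tbu by auto
    have e1: "v \<notin> verts K - {bd K t, bd K tb}" using bs vK by auto
    have e2: "flags (word_graph v w2 \<iota>') = flags K - {t, tb}"
      using setw2 setK by (auto simp: word_graph_def fK)
    have e3: "verts (word_graph v w2 \<iota>') = (verts K - {bd K t, bd K tb}) \<union> {v}"
      using bs vK by (auto simp: word_graph_def)
    have e4: "\<forall>f\<in>flags (word_graph v w2 \<iota>').
           bd (word_graph v w2 \<iota>') f = (if bd K f \<in> {bd K t, bd K tb} then v else bd K f) \<and>
           inv (word_graph v w2 \<iota>') f = inv K f \<and>
           cyc (word_graph v w2 \<iota>') f = (if bd K f \<in> {bd K t, bd K tb} then contr_cyc K t tb f else cyc K f)"
    proof
      fix f assume f: "f \<in> flags (word_graph v w2 \<iota>')"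
      then have fW: "f \<in> set w2" by (simp add: word_graph_def)
      have "bd K f \<in> {bd K t, bd K tb}" using bs bK by simp
      then show "bd (word_graph v w2 \<iota>') f = (if bd K f \<in> {bd K t, bd K tb} then v else bd K f) \<and>
           inv (word_graph v w2 \<iota>') f = inv K f \<and>
           cyc (word_graph v w2 \<iota>') f = (if bd K f \<in> {bd K t, bd K tb} then contr_cyc K t tb f else cyc K f)"
        using m fW by (simp add: word_graph_def iK)
    qed
    show ?thesis unfolding is_contraction_def using nl e1 e2 e3 e4 by blast
  qed
  define \<phi> where "\<phi> = (\<lambda>x. if x = s then tb else if x = s' then t else x)"
  define w3 where "w3 = A @ C @ s' # B @ [s]"
  have w23: "word_graph v w2 \<iota>' = word_graph v w3 \<iota>'"
    using wg_rotate[of "[s]" "A @ C @ s' # B" v \<iota>'] dw2 by (simp add: w2_def w3_def)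
  have wf3: "wfw \<iota>' w3" using wf2 dw2 by (auto simp: wfw_def w2_def w3_def)
  have outw3: "outer \<iota>' w3 = S" using outw2 by (auto simp: outer_def w2_def w3_def)
  have mapw3: "map \<phi> w3 = A @ C @ [t] @ B @ [tb]"
  proof -
    have "\<forall>x\<in>set (A @ C @ B). \<phi> x = x" using s s' by (auto simp: \<phi>_def W_def)
    then show ?thesis using ss by (simp add: w3_def \<phi>_def map_idI)
  qed
  have injphi: "inj_on \<phi> (set w3)"
  proof -
    have "t \<notin> set (A@C@B)" "tb \<notin> set (A@C@B)" "t \<noteq> tb" using dW by (auto simp: W_def)
    then show ?thesis using s s' ss unfolding inj_on_def \<phi>_def w3_def W_def by auto
  qed
  have phiinv: "\<forall>x\<in>set w3. \<iota> (\<phi> x) = \<phi> (\<iota>' x)"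
  proof
    fix x assume x: "x \<in> set w3"
    show "\<iota> (\<phi> x) = \<phi> (\<iota>' x)"
    proof (cases "x = s \<or> x = s'")
      case True then show ?thesis using ss it itb by (auto simp: \<phi>_def \<iota>'_def)
    next
      case False
      then have xW: "x \<in> set W" "x \<noteq> t" "x \<noteq> tb" using x setw2 by (auto simp: w3_def w2_def)
      have "\<iota> x \<in> set W" using clW xW by auto
      moreover have "\<iota> x \<noteq> t" "\<iota> x \<noteq> tb" using xW clW it itb by metis+
      ultimately show ?thesis using False s s' xW by (auto simp: \<phi>_def \<iota>'_def)
    qed
  qed
  have phiS: "\<forall>x\<in>S. \<phi> x = x" using s s' by (auto simp: S_def outer_def \<phi>_def)
  have iso: "rg_iso S (word_graph v w3 \<iota>') (word_graph v (A @ C @ [t] @ B @ [tb]) \<iota>) \<phi> (\<lambda>_. v)"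
    using wg_iso[OF wf3 injphi phiinv phiS, of v v] mapw3 by simp
  have wfT: "wfw \<iota> (A @ C @ [t] @ B @ [tb])"
    using wf by (auto simp: wfw_def)
  have outT: "outer \<iota> (A @ C @ [t] @ B @ [tb]) = S"
    by (auto simp: S_def outer_def W_def)
  have objT: "RI_obj S (word_graph v (A @ C @ [t] @ B @ [tb]) \<iota>)"
    using wg_RI_obj[OF wfT, of v] outT by simp
  have r1: "RI_connected S (word_graph v W \<iota>) K"
    using RI_conn_sym[OF RI_conn_contr[OF objK objH1 c1]] .
  have r2: "RI_connected S K (word_graph v w3 \<iota>')"
    using RI_conn_contr[OF objK objH2 c2] w23 by simp
  have objH3: "RI_obj S (word_graph v w3 \<iota>')" using objH2 w23 by simp
  have r3: "RI_connected S (word_graph v w3 \<iota>') (word_graph v (A @ C @ [t] @ B @ [tb]) \<iota>)"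
    using RI_conn_iso[OF objH3 objT iso] .
  show ?thesis using RI_conn_trans[OF RI_conn_trans[OF r1 r2] r3] by (simp add: S_def W_def)
qed


inductive mv :: "('f \<Rightarrow> 'f) \<Rightarrow> 'f list \<Rightarrow> 'f list \<Rightarrow> bool" for \<iota> where
  mv_refl: "mv \<iota> w w"
| mv_sym: "mv \<iota> w w' \<Longrightarrow> mv \<iota> w' w"
| mv_trans: "mv \<iota> a b \<Longrightarrow> mv \<iota> b c \<Longrightarrow> mv \<iota> a c"
| mv_rot: "mv \<iota> (X @ Y) (Y @ X)"
| mv_i: "\<iota> t = tb \<Longrightarrow> t \<noteq> tb \<Longrightarrow> mv \<iota> (A @ [t] @ B @ [tb] @ C) (A @ C @ [t] @ B @ [tb])"

lemma mv_set: "mv \<iota> w w' \<Longrightarrow> set w = set w' \<and> (distinct w \<longleftrightarrow> distinct w') \<and> length w = length w'"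
proof (induction rule: mv.induct)
  case (mv_refl w) show ?case by simp
next
  case (mv_sym w w') then show ?case by simp
next
  case (mv_trans a b c) then show ?case by simp
next
  case (mv_rot X Y) show ?case by auto
next
  case (mv_i t tb A B C) show ?case by auto
qed

lemmas [trans] = mv_trans

lemma mv_eq: "w = w' \<Longrightarrow> mv \<iota> w w'" by (simp add: mv_refl)

lemma mv_rot': "w = X @ Y \<Longrightarrow> w' = Y @ X \<Longrightarrow> mv \<iota> w w'" using mv_rot by blast

lemma mv_out:
  assumes "\<iota> t = tb" "t \<noteq> tb"
  shows "mv \<iota> (t # B @ tb # D1 @ D2) (t # B @ tb # D2 @ D1)"
proof -
  have "mv \<iota> (t # B @ tb # D1 @ D2) (D2 @ [t] @ B @ [tb] @ D1)"
    by (rule mv_rot'[where X="t # B @ tb # D1" and Y=D2]) auto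
  also have "mv \<iota> \<dots> (D2 @ D1 @ [t] @ B @ [tb])" by (rule mv_i) (rule assms)+
  also have "mv \<iota> \<dots> (t # B @ tb # D2 @ D1)"
    by (rule mv_rot'[where X="D2 @ D1" and Y="t # B @ [tb]"]) auto
  finally show ?thesis .
qed

lemma mv_in:
  assumes "\<iota> t = tb" "\<iota> tb = t" "t \<noteq> tb"
  shows "mv \<iota> (t # B1 @ B2 @ tb # D) (t # B2 @ B1 @ tb # D)"
proof -
  have "mv \<iota> (t # B1 @ B2 @ tb # D) (tb # D @ t # B1 @ B2)"
    by (rule mv_rot'[where X="t # B1 @ B2" and Y="tb # D"]) auto
  also have "mv \<iota> \<dots> (tb # D @ t # B2 @ B1)" using mv_out[of \<iota> tb t D B1 B2] assms by auto
  also have "mv \<iota> \<dots> (t # B2 @ B1 @ tb # D)"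
    by (rule mv_rot'[where X="tb # D" and Y="t # B2 @ B1"]) auto
  finally show ?thesis .
qed

lemma mv_slide:
  assumes "\<iota> t = tb" "t \<noteq> tb"
  shows "mv \<iota> (X @ (t # B @ [tb]) @ Y @ Z) (X @ Y @ (t # B @ [tb]) @ Z)"
proof -
  have "mv \<iota> (X @ (t # B @ [tb]) @ Y @ Z) (t # B @ tb # Y @ Z @ X)"
    by (rule mv_rot'[where X=X and Y="t # B @ tb # Y @ Z"]) auto
  also have "mv \<iota> \<dots> (t # B @ tb # (Z @ X) @ Y)" using mv_out[of \<iota> t tb B Y "Z @ X"] assms by simp
  also have "mv \<iota> \<dots> (X @ Y @ (t # B @ [tb]) @ Z)"
    by (rule mv_rot'[where X="t # B @ tb # Z" and Y="X @ Y"]) auto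
  finally show ?thesis .
qed

definition is_handle :: "('f \<Rightarrow> 'f) \<Rightarrow> 'f list \<Rightarrow> bool" where
  "is_handle \<iota> p \<longleftrightarrow> (\<exists>a b ab bb. p = [a, b, ab, bb] \<and> \<iota> a = ab \<and> \<iota> ab = a \<and> \<iota> b = bb \<and> \<iota> bb = b
      \<and> a \<noteq> ab \<and> b \<noteq> bb)"

lemma mv_handle0:
  assumes h: "\<iota> a = ab" "\<iota> ab = a" "\<iota> b = bb" "\<iota> bb = b" "a \<noteq> ab" "b \<noteq> bb"
  shows "mv \<iota> ([a, b, ab, bb] @ X @ Y) (X @ [a, b, ab, bb] @ Y)"
proof -
  have "mv \<iota> ([a, b, ab, bb] @ X @ Y) (a # [b] @ ab # Y @ (bb # X))"
    using mv_out[of \<iota> a ab "[b]" "bb # X" Y] h by simp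
  also have "mv \<iota> \<dots> (b # [ab] @ Y @ bb # X @ [a])"
    by (rule mv_rot'[where X="[a]" and Y="b # [ab] @ Y @ bb # X"]) auto
  also have "mv \<iota> \<dots> (b # Y @ [ab] @ bb # X @ [a])"
    using mv_in[of \<iota> b bb "[ab]" Y "X @ [a]"] h by simp
  also have "mv \<iota> \<dots> (a # [b] @ Y @ ab # bb # X)"
    by (rule mv_rot'[where X="b # Y @ [ab] @ bb # X" and Y="[a]"]) auto
  also have "mv \<iota> \<dots> (a # Y @ [b] @ ab # bb # X)"
    using mv_in[of \<iota> a ab "[b]" Y "bb # X"] h by simp
  also have "mv \<iota> \<dots> (b # [ab] @ bb # (X @ [a]) @ Y)"
    by (rule mv_rot'[where X="a # Y" and Y="b # [ab] @ bb # X"]) auto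
  also have "mv \<iota> \<dots> (b # [ab] @ bb # Y @ (X @ [a]))"
    using mv_out[of \<iota> b bb "[ab]" "X @ [a]" Y] h by simp
  also have "mv \<iota> \<dots> (X @ [a, b, ab, bb] @ Y)"
    by (rule mv_rot'[where X="b # ab # bb # Y" and Y="X @ [a]"]) auto
  finally show ?thesis .
qed

definition piece :: "('f \<Rightarrow> 'f) \<Rightarrow> 'f list \<Rightarrow> bool" where
  "piece \<iota> p \<longleftrightarrow> (\<exists>t B tb. p = t # B @ [tb] \<and> \<iota> t = tb \<and> t \<noteq> tb) \<or> is_handle \<iota> p"

lemma mv_piece:
  assumes "piece \<iota> p"
  shows "mv \<iota> (X @ p @ Y @ Z) (X @ Y @ p @ Z)"
  using assms unfolding piece_def
proof
  assume "\<exists>t B tb. p = t # B @ [tb] \<and> \<iota> t = tb \<and> t \<noteq> tb"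
  then obtain t B tb where h: "p = t # B @ [tb]" "\<iota> t = tb" "t \<noteq> tb" by blast
  show ?thesis using mv_slide[of \<iota> t tb X B Y Z] h by simp
next
  assume "is_handle \<iota> p"
  then obtain a b ab bb where h: "p = [a, b, ab, bb]" "\<iota> a = ab" "\<iota> ab = a" "\<iota> b = bb" "\<iota> bb = b"
      "a \<noteq> ab" "b \<noteq> bb" unfolding is_handle_def by blast
  have "mv \<iota> (X @ p @ Y @ Z) (p @ Y @ Z @ X)"
    by (rule mv_rot'[where X=X and Y="p @ Y @ Z"]) auto
  also have "mv \<iota> \<dots> (Y @ p @ Z @ X)" using mv_handle0[OF h(2-7), of Y "Z @ X"] h(1) by simp
  also have "mv \<iota> \<dots> (X @ Y @ p @ Z)"
    by (rule mv_rot'[where X="Y @ p @ Z" and Y=X]) auto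
  finally show ?thesis .
qed

lemma mv_pieces:
  assumes "\<forall>p\<in>set ps. piece \<iota> p"
  shows "mv \<iota> (X @ concat ps @ Y @ Z) (X @ Y @ concat ps @ Z)"
  using assms
proof (induction ps arbitrary: X Y Z)
  case Nil thus ?case by (simp add: mv_refl)
next
  case (Cons p ps)
  have "mv \<iota> ((X @ p) @ concat ps @ Y @ Z) ((X @ p) @ Y @ concat ps @ Z)"
    using Cons.IH[of "X @ p" Y Z] Cons.prems by simp
  also have "mv \<iota> \<dots> (X @ Y @ p @ concat ps @ Z)"
    using mv_piece[of \<iota> p X Y "concat ps @ Z"] Cons.prems by simp
  finally show ?case by simp
qed

lemma mv_lift:
  assumes "mv \<iota> w1 w2" "\<forall>p\<in>set ps. piece \<iota> p"
  shows "mv \<iota> (w1 @ concat ps) (w2 @ concat ps)"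
  using assms(1)
proof (induction rule: mv.induct)
  case (mv_refl w) thus ?case by (rule mv.mv_refl)
next
  case (mv_sym w w')
  show ?case by (rule mv.mv_sym[OF mv_sym.IH])
next
  case (mv_trans a b c)
  show ?case by (rule mv.mv_trans[OF mv_trans.IH(1) mv_trans.IH(2)])
next
  case (mv_rot X Y)
  have "mv \<iota> (X @ Y @ concat ps) (Y @ concat ps @ X)"
    by (rule mv_rot'[where X=X and Y="Y @ concat ps"]) auto
  also have "mv \<iota> \<dots> (Y @ X @ concat ps)"
    using mv_pieces[OF assms(2), of Y X "[]"] by simp
  finally show ?case by simp
next
  case (mv_i t tb A B C)
  then show ?case using mv_slide[of \<iota> t tb A B C "concat ps"] by simp
qed


lemma min_pair:
  assumes wf: "wfw \<iota> W" and ex: "\<exists>x\<in>set W. \<iota> x \<noteq> x"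
  shows "\<exists>A y B yb C. W = A @ y # B @ yb # C \<and> \<iota> y = yb \<and> y \<noteq> yb \<and>
            (\<forall>x\<in>set B. \<iota> x \<noteq> x \<longrightarrow> \<iota> x \<notin> set B)"
proof -
  have cl: "\<forall>x\<in>set W. \<iota> x \<in> set W \<and> \<iota> (\<iota> x) = x" using wf by (simp add: wfw_def)
  define P where "P d \<longleftrightarrow> (\<exists>A y B yb C. W = A @ y # B @ yb # C \<and> \<iota> y = yb \<and> y \<noteq> yb \<and> length B = d)" for d
  have Pintro: "P (length B)" if "W = A @ y # B @ yb # C" "\<iota> y = yb" "y \<noteq> yb" for A y B yb C
    unfolding P_def using that
    by (intro exI[of _ A] exI[of _ y] exI[of _ B] exI[of _ yb] exI[of _ C]) simp
  obtain x where x: "x \<in> set W" "\<iota> x \<noteq> x" using ex by blast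
  obtain A R where WAR: "W = A @ x # R" using x by (meson split_list)
  have "\<iota> x \<in> set A \<or> \<iota> x \<in> set R" using cl x WAR by auto
  then have "\<exists>d. P d"
  proof
    assume "\<iota> x \<in> set A"
    then obtain A1 A2 where "A = A1 @ \<iota> x # A2" by (meson split_list)
    then have "W = A1 @ \<iota> x # A2 @ x # R" using WAR by simp
    moreover have "\<iota> (\<iota> x) = x" using cl x by auto
    ultimately have "P (length A2)" using x Pintro[of A1 "\<iota> x" A2 x R] by simp
    then show ?thesis by blast
  next
    assume "\<iota> x \<in> set R"
    then obtain R1 R2 where "R = R1 @ \<iota> x # R2" by (meson split_list)
    then have "W = A @ x # R1 @ \<iota> x # R2" using WAR by simp
    then have "P (length R1)" using x Pintro[of A x R1 "\<iota> x" R2] by simp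
    then show ?thesis by blast
  qed
  define d where "d = (LEAST d. P d)"
  have Pd: "P d" using \<open>\<exists>d. P d\<close> unfolding d_def by (meson LeastI_ex)
  have mn: "\<And>d'. d' < d \<Longrightarrow> \<not> P d'" unfolding d_def using not_less_Least by blast
  obtain A y B yb C where W: "W = A @ y # B @ yb # C" "\<iota> y = yb" "y \<noteq> yb" "length B = d"
    using Pd unfolding P_def by blast
  have "\<forall>x\<in>set B. \<iota> x \<noteq> x \<longrightarrow> \<iota> x \<notin> set B"
  proof (intro ballI impI)
    fix z assume z: "z \<in> set B" "\<iota> z \<noteq> z"
    show "\<iota> z \<notin> set B"
    proof
      assume iz: "\<iota> z \<in> set B"
      obtain B1 B2 where B: "B = B1 @ z # B2" using z by (meson split_list)
      have "\<iota> z \<in> set B1 \<or> \<iota> z \<in> set B2" using iz z B by auto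
      then show False
      proof
        assume "\<iota> z \<in> set B1"
        then obtain B3 B4 where B1: "B1 = B3 @ \<iota> z # B4" by (meson split_list)
        have "W = (A @ y # B3) @ \<iota> z # B4 @ z # (B2 @ yb # C)" using W B B1 by simp
        moreover have "\<iota> (\<iota> z) = z" using cl z W by auto
        ultimately have "P (length B4)" using z Pintro[of "A @ y # B3" "\<iota> z" B4 z "B2 @ yb # C"] by simp
        moreover have "length B4 < d" using W B B1 by simp
        ultimately show False using mn by blast
      next
        assume "\<iota> z \<in> set B2"
        then obtain B3 B4 where B2: "B2 = B3 @ \<iota> z # B4" by (meson split_list)
        have "W = (A @ y # B1) @ z # B3 @ \<iota> z # (B4 @ yb # C)" using W B B2 by simp
        then have "P (length B3)" using z Pintro[of "A @ y # B1" z B3 "\<iota> z" "B4 @ yb # C"] by simp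
        moreover have "length B3 < d" using W B B2 by simp
        ultimately show False using mn by blast
      qed
    qed
  qed
  then show ?thesis using W by blast
qed

definition lf :: "('f \<times> 'f) \<times> 'f list \<Rightarrow> 'f list" where
  "lf = (\<lambda>((l, lb), Si). l # Si @ [lb])"
definition ef :: "'f \<times> 'f \<Rightarrow> 'f list" where
  "ef = (\<lambda>(e, eb). [e, eb])"
definition gf :: "'f \<times> 'f \<times> 'f \<times> 'f \<Rightarrow> 'f list" where
  "gf = (\<lambda>(a, b, ab, bb). [a, b, ab, bb])"

definition bnd :: "'f list list \<Rightarrow> ('f \<times> 'f) list \<Rightarrow> 'f list" where
  "bnd Ss ls = (case Ss of [] \<Rightarrow> [] | S1 # rest \<Rightarrow> S1 @ concat (map lf (zip ls rest)))"

lemma nf_word_eq: "nf_word Ss ls es gs = bnd Ss ls @ concat (map ef es) @ concat (map gf gs)"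
  unfolding nf_word_def bnd_def lf_def ef_def gf_def by (rule refl)

definition NF where
  "NF \<iota> W Ss ls es gs \<longleftrightarrow> length ls = length Ss - 1 \<and> (\<forall>Si\<in>set Ss. Si \<noteq> []) \<and>
     sorted (map length Ss) \<and> set (concat Ss) = outer \<iota> W \<and>
     (\<forall>(l, lb)\<in>set ls. \<iota> l = lb \<and> \<iota> lb = l \<and> l \<noteq> lb) \<and>
     (\<forall>(e, eb)\<in>set es. \<iota> e = eb \<and> \<iota> eb = e \<and> e \<noteq> eb) \<and>
     (\<forall>(a, b, ab, bb)\<in>set gs. \<iota> a = ab \<and> \<iota> ab = a \<and> \<iota> b = bb \<and> \<iota> bb = b \<and> a \<noteq> ab \<and> b \<noteq> bb) \<and>
     mv \<iota> W (nf_word Ss ls es gs)"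

lemma pieces_ls:
  assumes "\<forall>(l, lb)\<in>set ls. \<iota> l = lb \<and> \<iota> lb = l \<and> l \<noteq> lb"
  shows "\<forall>p\<in>set (map lf (zip ls rest)). piece \<iota> p"
proof
  fix p assume "p \<in> set (map lf (zip ls rest))"
  then obtain l lb Si where "((l, lb), Si) \<in> set (zip ls rest)" "p = l # Si @ [lb]"
    by (auto simp: lf_def)
  then show "piece \<iota> p" using assms unfolding piece_def by (auto dest!: set_zip_leftD)
qed

lemma pieces_es:
  assumes "\<forall>(e, eb)\<in>set es. \<iota> e = eb \<and> \<iota> eb = e \<and> e \<noteq> eb"
  shows "\<forall>p\<in>set (map ef es). piece \<iota> p"
proof
  fix p assume "p \<in> set (map ef es)"
  then obtain e eb where "(e, eb) \<in> set es" "p = e # [] @ [eb]" by (auto simp: ef_def)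
  then show "piece \<iota> p" using assms unfolding piece_def by blast
qed

lemma pieces_gs:
  assumes "\<forall>(a, b, ab, bb)\<in>set gs. \<iota> a = ab \<and> \<iota> ab = a \<and> \<iota> b = bb \<and> \<iota> bb = b \<and> a \<noteq> ab \<and> b \<noteq> bb"
  shows "\<forall>p\<in>set (map gf gs). piece \<iota> p"
proof
  fix p assume "p \<in> set (map gf gs)"
  then obtain a b ab bb where "(a, b, ab, bb) \<in> set gs" "p = [a, b, ab, bb]" by (auto simp: gf_def)
  then show "piece \<iota> p" using assms unfolding piece_def is_handle_def by fastforce
qed

lemma sorted_mid: "sorted (xs @ ys) \<Longrightarrow> \<forall>x\<in>set xs. x \<le> b \<Longrightarrow> \<forall>y\<in>set ys. b \<le> y \<Longrightarrow> sorted (xs @ b # ys)"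
  by (auto simp: sorted_append)


lemma wf_sub:
  assumes wf: "wfw \<iota> W" and m: "mv \<iota> W (W' @ R)" and
    Rcl: "\<forall>x\<in>set R. \<iota> x \<in> set R"
  shows "wfw \<iota> W'"
proof -
  have cl: "\<forall>x\<in>set W. \<iota> x \<in> set W \<and> \<iota> (\<iota> x) = x" using wf by (simp add: wfw_def)
  have s: "set W = set W' \<union> set R" and d: "distinct (W' @ R)"
    using mv_set[OF m] wf by (auto simp: wfw_def)
  have "\<forall>x\<in>set W'. \<iota> x \<in> set W' \<and> \<iota> (\<iota> x) = x"
  proof
    fix x assume x: "x \<in> set W'"
    have "\<iota> x \<notin> set R"
    proof
      assume "\<iota> x \<in> set R"
      then have "\<iota> (\<iota> x) \<in> set R" using Rcl by auto
      moreover have "\<iota> (\<iota> x) = x" using cl s x by auto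
      ultimately show False using d x by auto
    qed
    then show "\<iota> x \<in> set W' \<and> \<iota> (\<iota> x) = x" using cl s x by auto
  qed
  then show ?thesis using d by (simp add: wfw_def)
qed

lemma step_handle:
  assumes IH: "\<And>W'. length W' < length W \<Longrightarrow> wfw \<iota> W' \<Longrightarrow> \<exists>Ss ls es gs. NF \<iota> W' Ss ls es gs"
    and wf: "wfw \<iota> W" and W: "W = A @ y # B @ yb # C" and iy: "\<iota> y = yb" "y \<noteq> yb"
    and inner: "\<forall>x\<in>set B. \<iota> x \<noteq> x \<longrightarrow> \<iota> x \<notin> set B"
    and z: "z \<in> set B" "\<iota> z \<noteq> z"
  shows "\<exists>Ss ls es gs. NF \<iota> W Ss ls es gs"
proof -
  have cl: "\<forall>x\<in>set W. \<iota> x \<in> set W \<and> \<iota> (\<iota> x) = x" and dW: "distinct W"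
    using wf by (auto simp: wfw_def)
  have iyb: "\<iota> yb = y" using cl W iy by auto
  define zb where "zb = \<iota> z"
  have zbB: "zb \<notin> set B" using inner z by (simp add: zb_def)
  have izb: "\<iota> zb = z" using cl W z by (auto simp: zb_def)
  have zbW: "zb \<in> set W" using cl W z by (auto simp: zb_def)
  have zby: "zb \<noteq> y" "zb \<noteq> yb"
  proof -
    show "zb \<noteq> y" proof assume "zb = y" then have "z = yb" using izb iy by simp
      then show False using z dW W by auto qed
    show "zb \<noteq> yb" proof assume "zb = yb" then have "z = y" using izb iyb by simp
      then show False using z dW W by auto qed
  qed
  have "zb \<in> set (C @ A)" using zbW zbB zby W by auto
  then obtain D1 D2 where CA: "C @ A = D1 @ zb # D2" by (meson split_list)
  obtain B1 B2 where B: "B = B1 @ z # B2" using z by (meson split_list)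
  have zzb: "z \<noteq> zb" using z by (simp add: zb_def)
  have "mv \<iota> W (y # B @ yb # (C @ A))"
    by (rule mv_rot'[where X=A and Y="y # B @ yb # C"]) (auto simp: W)
  also have "y # B @ yb # (C @ A) = y # B @ yb # D1 @ (zb # D2)" using CA by simp
  also have "mv \<iota> \<dots> (y # B @ yb # (zb # D2) @ D1)" using mv_out[of \<iota> y yb B D1 "zb # D2"] iy by simp
  also have "\<dots> = y # B1 @ (z # B2) @ yb # (zb # D2 @ D1)" using B by simp
  also have "mv \<iota> \<dots> (y # (z # B2) @ B1 @ yb # (zb # D2 @ D1))"
    using mv_in[of \<iota> y yb B1 "z # B2" "zb # D2 @ D1"] iy iyb by simp
  also have "mv \<iota> \<dots> (z # (B2 @ B1) @ [yb] @ zb # (D2 @ D1 @ [y]))"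
    by (rule mv_rot'[where X="[y]" and Y="z # B2 @ B1 @ yb # zb # D2 @ D1"]) auto
  also have "mv \<iota> \<dots> (z # [yb] @ (B2 @ B1) @ zb # (D2 @ D1 @ [y]))"
    using mv_in[of \<iota> z zb "B2 @ B1" "[yb]" "D2 @ D1 @ [y]"] zzb izb by (simp add: zb_def)
  also have "mv \<iota> \<dots> (y # [z] @ yb # (B2 @ B1) @ (zb # D2 @ D1))"
    by (rule mv_rot'[where X="z # yb # B2 @ B1 @ zb # D2 @ D1" and Y="[y]"]) auto
  also have "mv \<iota> \<dots> (y # [z] @ yb # (zb # D2 @ D1) @ (B2 @ B1))"
    using mv_out[of \<iota> y yb "[z]" "B2 @ B1" "zb # D2 @ D1"] iy by simp
  also have "mv \<iota> \<dots> ((D2 @ D1 @ B2 @ B1) @ [y, z, yb, zb])"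
    by (rule mv_rot'[where X="[y, z, yb, zb]" and Y="D2 @ D1 @ B2 @ B1"]) auto
  finally have m1: "mv \<iota> W ((D2 @ D1 @ B2 @ B1) @ [y, z, yb, zb])" .
  define W' where "W' = D2 @ D1 @ B2 @ B1"
  have m1': "mv \<iota> W (W' @ [y, z, yb, zb])" using m1 by (simp add: W'_def)
  have wf': "wfw \<iota> W'"
    by (rule wf_sub[OF wf m1']) (use iy iyb izb in \<open>auto simp: zb_def\<close>)
  have len: "length W' < length W" using mv_set[OF m1'] by simp
  have sW: "set W = set W' \<union> {y, z, yb, zb}" using mv_set[OF m1'] by auto
  have outW: "outer \<iota> W' = outer \<iota> W"
    unfolding outer_def sW using iy iyb izb zzb z by (auto simp: zb_def)
  obtain Ss ls es gs where nf: "NF \<iota> W' Ss ls es gs" using IH[OF len wf'] by blast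
  have piece: "\<forall>p\<in>set [[y, z, yb, zb]]. piece \<iota> p"
    unfolding piece_def is_handle_def using iy iyb izb zzb by (auto simp: zb_def)
  have "mv \<iota> (W' @ [y, z, yb, zb]) (nf_word Ss ls es gs @ [y, z, yb, zb])"
    using mv_lift[OF _ piece, of W' "nf_word Ss ls es gs"] nf by (simp add: NF_def)
  then have "mv \<iota> W (nf_word Ss ls es (gs @ [(y, z, yb, zb)]))"
    using m1' by (simp add: nf_word_eq gf_def mv_trans)
  then have "NF \<iota> W Ss ls es (gs @ [(y, z, yb, zb)])"
    using nf outW iy iyb izb zzb unfolding NF_def by (auto simp: zb_def)
  then show ?thesis by blast
qed


lemma NF_D:
  assumes "NF \<iota> W Ss ls es gs"
  shows "length ls = length Ss - 1" "\<forall>Si\<in>set Ss. Si \<noteq> []" "sorted (map length Ss)"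
    "set (concat Ss) = outer \<iota> W"
    "\<forall>(l, lb)\<in>set ls. \<iota> l = lb \<and> \<iota> lb = l \<and> l \<noteq> lb"
    "\<forall>(e, eb)\<in>set es. \<iota> e = eb \<and> \<iota> eb = e \<and> e \<noteq> eb"
    "\<forall>(a, b, ab, bb)\<in>set gs. \<iota> a = ab \<and> \<iota> ab = a \<and> \<iota> b = bb \<and> \<iota> bb = b \<and> a \<noteq> ab \<and> b \<noteq> bb"
    "mv \<iota> W (nf_word Ss ls es gs)"
  using assms unfolding NF_def by simp_all

lemma block_cases:
  assumes nf: "NF \<iota> W' Ss ls es gs"
    and mW: "mv \<iota> W (nf_word Ss ls es gs @ (y # B @ [yb]))"
    and iy: "\<iota> y = yb" "\<iota> yb = y" "y \<noteq> yb" and allout: "\<forall>x\<in>set B. \<iota> x = x"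
    and outW: "outer \<iota> W = outer \<iota> W' \<union> set B"
  shows "\<exists>Ss' ls' es' gs'. NF \<iota> W Ss' ls' es' gs'"
proof -
  note N = NF_D[OF nf]
  define E where "E = concat (map ef es)"
  define Gs where "Gs = concat (map gf gs)"
  have pe: "\<forall>p\<in>set (map ef es). piece \<iota> p" using pieces_es N(6) .
  have pg: "\<forall>p\<in>set (map gf gs). piece \<iota> p" using pieces_gs N(7) .
  have nfe: "nf_word Ss ls es gs = bnd Ss ls @ E @ Gs" by (simp add: nf_word_eq E_def Gs_def)
  show ?thesis
  proof (cases "B = []")
    case True
    have "mv \<iota> (bnd Ss ls @ E @ Gs @ (y # B @ [yb])) (bnd Ss ls @ E @ [y, yb] @ Gs)"
      using mv_sym[OF mv_slide[of \<iota> y yb "bnd Ss ls @ E" "[]" Gs "[]"]] iy True by simp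
    then have "mv \<iota> W (nf_word Ss ls (es @ [(y, yb)]) gs)"
      using mW nfe by (simp add: nf_word_eq E_def Gs_def ef_def mv_trans)
    then have "NF \<iota> W Ss ls (es @ [(y, yb)]) gs"
      using N iy True outW unfolding NF_def by auto
    then show ?thesis by blast
  next
    case Bne: False
    show ?thesis
    proof (cases Ss)
      case Nil
      then have ls: "ls = []" using N(1) by simp
      have bn: "bnd Ss ls = []" using Nil by (simp add: bnd_def)
      define ps where "ps = map ef es @ map gf gs"
      have pps: "\<forall>p\<in>set ps. piece \<iota> p" using pe pg by (auto simp: ps_def)
      have P: "concat ps = E @ Gs" by (simp add: ps_def E_def Gs_def)
      have "mv \<iota> (concat ps @ y # B @ [yb]) ([y] @ (B @ [yb]) @ concat ps)"
        by (rule mv_rot'[where X="concat ps" and Y="y # B @ [yb]"]) auto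
      also have "mv \<iota> \<dots> ([y] @ concat ps @ (B @ [yb]))"
        using mv_sym[OF mv_pieces[OF pps, of "[y]" "B @ [yb]" "[]"]] by simp
      also have "mv \<iota> \<dots> (B @ [yb] @ [y] @ concat ps)"
        by (rule mv_rot'[where X="y # concat ps" and Y="B @ [yb]"]) auto
      finally have m: "mv \<iota> (concat ps @ y # B @ [yb]) (B @ [yb] @ [y] @ concat ps)" .
      have "nf_word [B] [] ((yb, y) # es) gs = B @ [yb] @ [y] @ concat ps"
        by (simp add: nf_word_eq bnd_def ef_def P E_def Gs_def)
      then have "mv \<iota> W (nf_word [B] [] ((yb, y) # es) gs)"
        using mW m nfe bn P by (simp add: mv_trans)
      moreover have "set (concat Ss) = {}" using Nil by simp
      ultimately have "NF \<iota> W [B] [] ((yb, y) # es) gs"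
        using N iy Bne outW unfolding NF_def by auto
      then show ?thesis by blast
    next
      case (Cons S1 rest)
      define L where "L = concat (map lf (zip ls rest))"
      have bn: "bnd Ss ls = S1 @ L" using Cons by (simp add: bnd_def L_def)
      have lenls: "length ls = length rest" using N(1) Cons by simp
      have pl: "\<forall>p\<in>set (map lf (zip ls rest)). piece \<iota> p" using pieces_ls N(5) .
      show ?thesis
      proof (cases "length B < length S1")
        case True
        define ps where "ps = map lf (zip ls rest) @ map ef es @ map gf gs"
        have pps: "\<forall>p\<in>set ps. piece \<iota> p" using pe pg pl by (auto simp: ps_def)
        have P: "concat ps = L @ E @ Gs" by (simp add: ps_def L_def E_def Gs_def)
        have "mv \<iota> (S1 @ concat ps @ y # B @ [yb]) (y # B @ yb # S1 @ concat ps)"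
          by (rule mv_rot'[where X="S1 @ concat ps" and Y="y # B @ [yb]"]) auto
        also have "mv \<iota> \<dots> (y # B @ yb # concat ps @ S1)"
          using mv_out[of \<iota> y yb B S1 "concat ps"] iy by simp
        also have "mv \<iota> \<dots> ([y] @ concat ps @ (B @ [yb]) @ S1)"
          using mv_sym[OF mv_pieces[OF pps, of "[y]" "B @ [yb]" S1]] by simp
        also have "mv \<iota> \<dots> (B @ [yb] @ S1 @ [y] @ concat ps)"
          by (rule mv_rot'[where X="y # concat ps" and Y="B @ yb # S1"]) auto
        finally have m: "mv \<iota> (S1 @ concat ps @ y # B @ [yb]) (B @ [yb] @ S1 @ [y] @ concat ps)" .
        have "nf_word (B # S1 # rest) ((yb, y) # ls) es gs = B @ [yb] @ S1 @ [y] @ concat ps"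
          by (simp add: nf_word_eq bnd_def lf_def P L_def E_def Gs_def)
        then have mm: "mv \<iota> W (nf_word (B # S1 # rest) ((yb, y) # ls) es gs)"
          using mW m nfe bn P by (simp add: mv_trans)
        have so: "sorted (map length (B # S1 # rest))"
          using N(3) Cons True by auto
        have "NF \<iota> W (B # S1 # rest) ((yb, y) # ls) es gs"
          unfolding NF_def
          using N Cons iy Bne outW mm so lenls by auto
        then show ?thesis by blast
      next
        case False
        define Q where "Q = (\<lambda>S :: 'a list. length S \<le> length B)"
        define R1 where "R1 = takeWhile Q rest"
        define R2 where "R2 = dropWhile Q rest"
        define k where "k = length R1"
        define ls1 where "ls1 = take k ls"
        define ls2 where "ls2 = drop k ls"
        have rest: "rest = R1 @ R2" by (simp add: R1_def R2_def)
        have lsx: "ls = ls1 @ ls2" by (simp add: ls1_def ls2_def)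
        have l1: "length ls1 = length R1" using lenls rest by (simp add: ls1_def k_def)
        have zz: "zip ls rest = zip ls1 R1 @ zip ls2 R2" using rest lsx l1 by simp
        define L1 where "L1 = concat (map lf (zip ls1 R1))"
        define L2 where "L2 = concat (map lf (zip ls2 R2))"
        have LL: "L = L1 @ L2" by (simp add: L_def L1_def L2_def zz)
        have "mv \<iota> ((S1 @ L1) @ (y # B @ [yb]) @ (L2 @ E @ Gs) @ [])
                    ((S1 @ L1) @ (L2 @ E @ Gs) @ (y # B @ [yb]) @ [])"
          using mv_slide[of \<iota> y yb "S1 @ L1" B "L2 @ E @ Gs" "[]"] iy by simp
        then have m: "mv \<iota> (S1 @ L @ E @ Gs @ y # B @ [yb]) (S1 @ L1 @ (y # B @ [yb]) @ L2 @ E @ Gs)"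
          using mv_sym LL by fastforce
        have "nf_word (S1 # R1 @ B # R2) (ls1 @ (y, yb) # ls2) es gs = S1 @ L1 @ (y # B @ [yb]) @ L2 @ E @ Gs"
          using l1 by (simp add: nf_word_eq bnd_def lf_def L1_def L2_def E_def Gs_def)
        then have mm: "mv \<iota> W (nf_word (S1 # R1 @ B # R2) (ls1 @ (y, yb) # ls2) es gs)"
          using mW m nfe bn by (simp add: mv_trans)
        have sr: "sorted (map length rest)" and s1: "\<forall>S\<in>set rest. length S1 \<le> length S"
          using N(3) Cons by auto
        have sR: "sorted (map length R1 @ map length R2)" using sr rest by simp
        have c1: "\<forall>x\<in>set (map length R1). x \<le> length B"
          by (auto simp: R1_def Q_def dest: set_takeWhileD)
        have c2: "\<forall>x\<in>set (map length R2). length B \<le> x"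
        proof (cases R2)
          case Nil then show ?thesis by simp
        next
          case (Cons r R2')
          have "\<not> Q r" using Cons unfolding R2_def by (metis hd_dropWhile list.distinct(1) list.sel(1))
          then have "length B < length r" by (simp add: Q_def)
          moreover have "sorted (map length R2)" using sR by (simp add: sorted_append)
          ultimately show ?thesis using Cons by auto
        qed
        have so1: "sorted (map length R1 @ length B # map length R2)" by (rule sorted_mid[OF sR c1 c2])
        have so: "sorted (map length (S1 # R1 @ B # R2))"
          using so1 s1 rest False by auto
        have setls: "set (ls1 @ (y, yb) # ls2) = insert (y, yb) (set ls)" using lsx by auto
        have "NF \<iota> W (S1 # R1 @ B # R2) (ls1 @ (y, yb) # ls2) es gs"
          unfolding NF_def
        proof (intro conjI)
          show "length (ls1 @ (y, yb) # ls2) = length (S1 # R1 @ B # R2) - 1"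
            using lenls rest lsx by simp
          show "\<forall>Si\<in>set (S1 # R1 @ B # R2). Si \<noteq> []" using N(2) Cons rest Bne by auto
          show "set (concat (S1 # R1 @ B # R2)) = outer \<iota> W" using N(4) Cons rest outW by auto
          show "\<forall>(l, lb)\<in>set (ls1 @ (y, yb) # ls2). \<iota> l = lb \<and> \<iota> lb = l \<and> l \<noteq> lb"
            using N(5) iy setls by auto
        qed (use so N(6) N(7) mm in auto)
        then show ?thesis by blast
      qed
    qed
  qed
qed


lemma step_block:
  assumes IH: "\<And>W'. length W' < length W \<Longrightarrow> wfw \<iota> W' \<Longrightarrow> \<exists>Ss ls es gs. NF \<iota> W' Ss ls es gs"
    and wf: "wfw \<iota> W" and W: "W = A @ y # B @ yb # C" and iy: "\<iota> y = yb" "y \<noteq> yb"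
    and allout: "\<forall>x\<in>set B. \<iota> x = x"
  shows "\<exists>Ss ls es gs. NF \<iota> W Ss ls es gs"
proof -
  have cl: "\<forall>x\<in>set W. \<iota> x \<in> set W \<and> \<iota> (\<iota> x) = x" using wf by (simp add: wfw_def)
  have iyb: "\<iota> yb = y" using cl W iy by auto
  have m1: "mv \<iota> W ((C @ A) @ (y # B @ [yb]))"
    by (rule mv_rot'[where X="A @ y # B @ [yb]" and Y=C]) (simp_all add: W)
  have blkcl: "\<forall>x\<in>set (y # B @ [yb]). \<iota> x \<in> set (y # B @ [yb])" using iy iyb allout by auto
  have wf': "wfw \<iota> (C @ A)" by (rule wf_sub[OF wf m1 blkcl])
  have len: "length (C @ A) < length W" using W by simp
  have outW: "outer \<iota> W = outer \<iota> (C @ A) \<union> set B"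
    unfolding outer_def using iy iyb allout by (auto simp: W)
  obtain Ss ls es gs where nf: "NF \<iota> (C @ A) Ss ls es gs" using IH[OF len wf'] by blast
  have pc: "\<forall>p\<in>set [y # B @ [yb]]. piece \<iota> p" unfolding piece_def using iy by auto
  have "mv \<iota> ((C @ A) @ concat [y # B @ [yb]]) (nf_word Ss ls es gs @ concat [y # B @ [yb]])"
    by (rule mv_lift[OF NF_D(8)[OF nf] pc])
  then have mW: "mv \<iota> W (nf_word Ss ls es gs @ (y # B @ [yb]))" using m1 mv_trans by fastforce
  show ?thesis by (rule block_cases[OF nf mW iy(1) iyb iy(2) allout outW])
qed

lemma nf_exists: "wfw \<iota> W \<Longrightarrow> \<exists>Ss ls es gs. NF \<iota> W Ss ls es gs"
proof (induction "length W" arbitrary: W rule: less_induct)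
  case less
  have IH: "\<And>W'. length W' < length W \<Longrightarrow> wfw \<iota> W' \<Longrightarrow> \<exists>Ss ls es gs. NF \<iota> W' Ss ls es gs"
    using less by blast
  show ?case
  proof (cases "\<exists>x\<in>set W. \<iota> x \<noteq> x")
    case False
    then have out: "outer \<iota> W = set W" by (auto simp: outer_def)
    show ?thesis
    proof (cases "W = []")
      case True
      have "NF \<iota> W [] [] [] []" unfolding NF_def using True out
        by (simp add: nf_word_eq bnd_def mv_refl)
      then show ?thesis by blast
    next
      case False
      have "nf_word [W] [] [] [] = W" by (simp add: nf_word_eq bnd_def)
      then have "NF \<iota> W [W] [] [] []" unfolding NF_def using False out
        by (simp add: mv_refl)
      then show ?thesis by blast
    qed
  next
    case True
    obtain A y B yb C where W: "W = A @ y # B @ yb # C" "\<iota> y = yb" "y \<noteq> yb"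
      and inner: "\<forall>x\<in>set B. \<iota> x \<noteq> x \<longrightarrow> \<iota> x \<notin> set B"
      using min_pair[OF less.prems True] by blast
    show ?thesis
    proof (cases "\<exists>z\<in>set B. \<iota> z \<noteq> z")
      case True
      then obtain z where "z \<in> set B" "\<iota> z \<noteq> z" by blast
      then show ?thesis using step_handle[OF IH less.prems W inner] by blast
    next
      case False
      then have "\<forall>x\<in>set B. \<iota> x = x" by blast
      then show ?thesis using step_block[OF IH less.prems W] by blast
    qed
  qed
qed

lemma mv_sound:
  fixes v :: 'v and \<iota> :: "'f \<Rightarrow> 'f"
  assumes infv: "\<exists>v2::'v. v2 \<noteq> v" and inff: "infinite (UNIV::'f set)"
  shows "mv \<iota> w w' \<Longrightarrow> wfw \<iota> w \<Longrightarrow> RI_connected (outer \<iota> w) (word_graph v w \<iota>) (word_graph v w' \<iota>)"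
proof (induction rule: mv.induct)
  case (mv_refl w) show ?case by (rule RI_conn_refl)
next
  case (mv_sym w w')
  have s: "set w = set w'" "distinct w = distinct w'" using mv_set[OF mv_sym.hyps] by auto
  have wf: "wfw \<iota> w" using mv_sym.prems s by (simp add: wfw_def)
  have o: "outer \<iota> w = outer \<iota> w'" using s by (simp add: outer_def)
  show ?case using RI_conn_sym[OF mv_sym.IH[OF wf]] o by simp
next
  case (mv_trans a b c)
  have s: "set a = set b" "distinct a = distinct b" using mv_set[OF mv_trans.hyps(1)] by auto
  have wf: "wfw \<iota> b" using mv_trans.prems s by (simp add: wfw_def)
  have o: "outer \<iota> a = outer \<iota> b" using s by (simp add: outer_def)
  have r2: "RI_connected (outer \<iota> a) (word_graph v b \<iota>) (word_graph v c \<iota>)"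
    using mv_trans.IH(2)[OF wf] o by simp
  show ?case using RI_conn_trans[OF mv_trans.IH(1)[OF mv_trans.prems] r2] .
next
  case (mv_rot X Y)
  have "distinct (X @ Y)" using mv_rot.prems by (simp add: wfw_def)
  then show ?case using wg_rotate[of X Y v \<iota>] RI_conn_refl by simp
next
  case (mv_i t tb A B C)
  show ?case using move_i[OF infv inff mv_i.prems mv_i.hyps(1)] by simp
qed


lemma it_in: "\<forall>x\<in>F. c x \<in> F \<Longrightarrow> x \<in> F \<Longrightarrow> (c^^m) x \<in> F"
  by (induction m) auto

lemma it_inj:
  assumes "inj_on c F" "\<forall>x\<in>F. c x \<in> F" "x \<in> F" "y \<in> F" "(c^^m) x = (c^^m) y"
  shows "x = y"
  using assms(5)
proof (induction m)
  case 0 then show ?case by simp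
next
  case (Suc m)
  have "(c^^m) x \<in> F" "(c^^m) y \<in> F" using it_in[OF assms(2) assms(3)] it_in[OF assms(2) assms(4)] by auto
  moreover have "c ((c^^m) x) = c ((c^^m) y)" using Suc.prems by simp
  ultimately have "(c^^m) x = (c^^m) y" using assms(1) by (meson inj_onD)
  then show ?case using Suc.IH by blast
qed

lemma it_period:
  assumes "(c^^d) z = z" shows "(c^^m) z = (c^^(m mod d)) z"
proof -
  have p: "(c^^(q * d)) z = z" for q
  proof (induction q)
    case 0 then show ?case by simp
  next
    case (Suc q)
    have "(c^^(Suc q * d)) z = (c^^d) ((c^^(q * d)) z)" by (simp add: funpow_add)
    then show ?case using Suc assms by simp
  qed
  have "m = m mod d + (m div d) * d" by simp
  then have "(c^^m) z = (c^^(m mod d)) ((c^^((m div d) * d)) z)"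
    by (metis funpow_add o_apply)
  then show ?thesis using p by simp
qed

lemma graph_word:
  assumes rg: "ribbon_graph G" and V: "verts G = {v0}"
  shows "\<exists>w. distinct w \<and> set w = flags G \<and> (\<forall>x\<in>flags G. cyc G x = cyc_of_word w x)"
proof (cases "flags G = {}")
  case True then show ?thesis by (intro exI[of _ "[]"]) simp
next
  case False
  define F where "F = flags G"
  define c where "c = cyc G"
  have fin: "finite F" using rg by (simp add: ribbon_graph_def F_def)
  obtain f0 where f0: "f0 \<in> F" using False by (auto simp: F_def)
  define n where "n = card F"
  have n0: "n > 0" using fin f0 by (auto simp: n_def card_gt_0_iff)
  have bij: "bij_betw c F F" using rg by (simp add: ribbon_graph_def F_def c_def)
  have cF: "\<forall>x\<in>F. c x \<in> F" using bij by (auto simp: bij_betw_def)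
  have inj: "inj_on c F" using bij by (simp add: bij_betw_def)
  have bdv: "\<forall>f\<in>F. bd G f = v0" using rg V by (auto simp: ribbon_graph_def F_def)
  have reach: "\<forall>g\<in>F. \<exists>m. (c^^m) f0 = g"
    using rg f0 bdv by (simp add: ribbon_graph_def F_def c_def)
  define w where "w = map (\<lambda>i. (c^^i) f0) [0..<n]"
  have lw: "length w = n" by (simp add: w_def)
  have wi: "\<And>i. i < n \<Longrightarrow> w!i = (c^^i) f0" by (simp add: w_def)
  have noper: "\<not> (0 < d \<and> d < n \<and> (c^^d) f0 = f0)" for d
  proof
    assume a: "0 < d \<and> d < n \<and> (c^^d) f0 = f0"
    have "F \<subseteq> (\<lambda>r. (c^^r) f0) ` {..<d}"
    proof
      fix g assume "g \<in> F"
      then obtain m where "(c^^m) f0 = g" using reach by blast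
      then have "g = (c^^(m mod d)) f0" using it_period[where c=c and d=d and z=f0 and m=m] a by simp
      moreover have "m mod d < d" using a by simp
      ultimately show "g \<in> (\<lambda>r. (c^^r) f0) ` {..<d}" by blast
    qed
    then have "card F \<le> card ((\<lambda>r. (c^^r) f0) ` {..<d})" by (simp add: card_mono)
    also have "\<dots> \<le> d" using card_image_le[of "{..<d}" "\<lambda>r. (c^^r) f0"] by simp
    finally show False using a by (simp add: n_def)
  qed
  have dist: "distinct w"
  proof -
    have "w!i \<noteq> w!j" if ij: "i < j" "j < n" for i j
    proof
      assume e: "w!i = w!j"
      then have "(c^^i) f0 = (c^^i) ((c^^(j - i)) f0)"
        using ij wi by (metis funpow_add le_add_diff_inverse less_imp_le o_apply order.strict_trans)
      then have "f0 = (c^^(j - i)) f0"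
        using it_inj[OF inj cF f0 it_in[OF cF f0]] by blast
      then show False using noper[of "j - i"] ij by simp
    qed
    then show ?thesis unfolding distinct_conv_nth lw by (metis linorder_neq_iff)
  qed
  have sw: "set w = F"
  proof -
    have "set w \<subseteq> F" using it_in[OF cF f0] by (auto simp: w_def)
    moreover have "card (set w) = card F" using dist lw by (simp add: distinct_card n_def)
    ultimately show ?thesis using fin card_subset_eq by blast
  qed
  have cw: "\<forall>x\<in>F. c x = cyc_of_word w x"
  proof
    fix x assume "x \<in> F"
    then obtain i where i: "i < n" "x = w!i" using set_idx[of x w] sw lw by auto
    have cn: "cyc_of_word w x = w ! (Suc i mod n)" using cyc_nth[OF dist, of i] i lw by simp
    show "c x = cyc_of_word w x"
    proof (cases "Suc i < n")
      case True
      then show ?thesis using cn i wi by simp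
    next
      case False
      then have ni: "Suc i = n" using i by simp
      have cx: "c x \<in> F" using cF \<open>x \<in> F\<close> by blast
      then obtain k where k: "k < n" "c x = w!k" using set_idx[of "c x" w] sw lw by auto
      have "k = 0"
      proof (rule ccontr)
        assume "k \<noteq> 0"
        then obtain k' where k': "k = Suc k'" by (cases k) auto
        have "c x = c (w!k')" using k k' wi by simp
        moreover have "w!k' \<in> F" using k k' sw lw by (metis Suc_lessD nth_mem)
        ultimately have "x = w!k'" using inj \<open>x \<in> F\<close> by (meson inj_onD)
        then have "i = k'" using i dist lw k k' by (simp add: nth_eq_iff_index_eq)
        then show False using ni k k' by simp
      qed
      then show ?thesis using cn k ni by simp
    qed
  qed
  show ?thesis using dist sw cw by (auto simp: F_def c_def)
qed


theorem corollary5p11: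
  fixes dummy_f :: 'f and dummy_v :: 'v
  assumes "infinite (UNIV :: 'f set)" and "infinite (UNIV :: 'v set)"
  shows
    "(\<forall>(A :: 'f list) B C t tb (\<iota> :: 'f \<Rightarrow> 'f) (v :: 'v).
        distinct (A @ [t] @ B @ [tb] @ C) \<and>
        (\<forall>x\<in>set (A @ [t] @ B @ [tb] @ C).
            \<iota> x \<in> set (A @ [t] @ B @ [tb] @ C) \<and> \<iota> (\<iota> x) = x) \<and>
        \<iota> t = tb
        \<longrightarrow> RI_connected {x \<in> set (A @ [t] @ B @ [tb] @ C). \<iota> x = x}
              (word_graph v (A @ [t] @ B @ [tb] @ C) \<iota>)
              (word_graph v (A @ C @ [t] @ B @ [tb]) \<iota>))
     \<and>
     (\<forall>(S :: 'f set) (G :: ('f, 'v) rgraph).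
        RI_obj S G \<and> card (verts G) = 1
        \<longrightarrow> (\<exists>v H. is_normal_form S v H \<and> RI_connected S G H))"
proof (intro conjI allI impI)
  have infv: "\<exists>v2::'v. v2 \<noteq> v" for v :: 'v
    using ex_new_if_finite[OF assms(2), of "{v}"] by auto
  fix A B C t tb and \<iota> :: "'f \<Rightarrow> 'f" and v :: 'v
  assume h: "distinct (A @ [t] @ B @ [tb] @ C) \<and>
        (\<forall>x\<in>set (A @ [t] @ B @ [tb] @ C).
            \<iota> x \<in> set (A @ [t] @ B @ [tb] @ C) \<and> \<iota> (\<iota> x) = x) \<and> \<iota> t = tb"
  have wf: "wfw \<iota> (A @ [t] @ B @ [tb] @ C)" using h unfolding wfw_def by blast
  show "RI_connected {x \<in> set (A @ [t] @ B @ [tb] @ C). \<iota> x = x}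
              (word_graph v (A @ [t] @ B @ [tb] @ C) \<iota>)
              (word_graph v (A @ C @ [t] @ B @ [tb]) \<iota>)"
    using move_i[OF infv assms(1) wf] h by (simp only: outer_def)
next
  have infv: "\<exists>v2::'v. v2 \<noteq> v" for v :: 'v
    using ex_new_if_finite[OF assms(2), of "{v}"] by auto
  fix S and G :: "('f, 'v) rgraph"
  assume h: "RI_obj S G \<and> card (verts G) = 1"
  then obtain v0 where V: "verts G = {v0}" by (meson card_1_singletonE)
  have rg: "ribbon_graph G" and oS: "outer_flags G = S" using h by (auto simp: RI_obj_def)
  obtain w where w: "distinct w" "set w = flags G" "\<forall>x\<in>flags G. cyc G x = cyc_of_word w x"
    using graph_word[OF rg V] by blast
  define \<iota> where "\<iota> = inv G"
  have wf: "wfw \<iota> w" using rg w by (auto simp: wfw_def ribbon_graph_def \<iota>_def)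
  have ow: "outer \<iota> w = S" using oS w by (auto simp: outer_def outer_flags_def \<iota>_def)
  have objW: "RI_obj S (word_graph v0 w \<iota>)" using wg_RI_obj[OF wf, of v0] ow by simp
  have bdv: "\<forall>f\<in>flags G. bd G f = v0" using rg V by (auto simp: ribbon_graph_def)
  have iso: "rg_iso S G (word_graph v0 w \<iota>) id (\<lambda>_. v0)"
    unfolding rg_iso_def using w bdv V by (auto simp: word_graph_def \<iota>_def bij_betw_def)
  have r1: "RI_connected S G (word_graph v0 w \<iota>)"
    by (rule RI_conn_iso[OF _ objW iso]) (use h in blast)
  obtain Ss ls es gs where nf: "NF \<iota> w Ss ls es gs" using nf_exists[OF wf] by blast
  note N = NF_D[OF nf]
  have r2: "RI_connected S (word_graph v0 w \<iota>) (word_graph v0 (nf_word Ss ls es gs) \<iota>)"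
    using mv_sound[OF infv assms(1) N(8) wf] ow by simp
  have dnf: "distinct (nf_word Ss ls es gs)" using mv_set[OF N(8)] w(1) by simp
  have fx: "\<forall>x\<in>set (concat Ss). \<iota> x = x" using N(4) by (simp add: outer_def)
  have "is_normal_form S v0 (word_graph v0 (nf_word Ss ls es gs) \<iota>)"
    unfolding is_normal_form_def
  proof (intro exI conjI)
    show "set (concat Ss) = S" using N(4) ow by simp
    show "\<forall>(l, lb)\<in>set ls. \<iota> l = lb \<and> \<iota> lb = l" using N(5) by auto
    show "\<forall>(e, eb)\<in>set es. \<iota> e = eb \<and> \<iota> eb = e" using N(6) by auto
    show "\<forall>(a, b, ab, bb)\<in>set gs. \<iota> a = ab \<and> \<iota> ab = a \<and> \<iota> b = bb \<and> \<iota> bb = b" using N(7) by auto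
  qed (use N(1) N(2) N(3) dnf fx in auto)
  then show "\<exists>v H. is_normal_form S v H \<and> RI_connected S G H"
    using RI_conn_trans[OF r1 r2] by blast
qed


end
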